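(* The function $H_2$ is given by the formula $$ H_2(z)=\frac{1}{2}\frac{(1-\vert z\vert^2)^4}{\vert1-z\vert^2} +\frac{1}{2}\frac{(1-\vert z\vert^2)^5}{\vert1-z\vert^4} -\frac{1}{4}\frac{(1-\vert z\vert^2)^4}{\vert1-z\vert^4} +\frac{1}{6}\frac{(1-\vert z\vert^2)^6}{\vert1-z\vert^6}, \quad z\in\mathbb{D}. $$
   Context: Let $\mathbb{D}$ be the unit disc, $\mathbb{T}=\partial\mathbb{D}$ the unit circle, $\Delta=\partial^2/\partial z\partial\bar z$, and for $\gamma>-1$ let $w_\gamma(z)=(1-\lvert z\rvert^2)^\gamma$, $z\in\mathbb{D}$. For a smooth function $u$ in $\mathbb{D}$ write $u_r(e^{i\theta})=u(re^{i\theta})$ for $0\le r<1$. We say $u=f_0$ on $\mathbb{T}$ (with $f_0\in\mathcal{D}'(\mathbb{T})$) if $\lim_{r\to1}u_r=f_0$ in $\mathcal{D}'(\mathbb{T})$, and the inward normal derivative is $\partial_n u=\lim_{r\to1}(u_r-f_0)/(1-r)$ in $\mathcal{D}'(\mathbb{T})$ when the limit exists. The Poisson kernel $H_\gamma$ is the (unique) solution, in this distributional sense, of $\Delta w_\gamma^{-1}\Delta H_\gamma=0$ in $\mathbb{D}$, $H_\gamma=0$ on $\mathbb{T}$, $\partial_n H_\gamma=\delta_1$ on $\mathbb{T}$, where $\delta_1$ is the unit Dirac mass at $1\in\mathbb{T}$. Here $\gamma=2$. *)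

theory Defs
  imports "HOL-Analysis.Analysis"
begin

definition dx :: "(complex \<Rightarrow> real) \<Rightarrow> complex \<Rightarrow> real" where
  "dx f z = deriv (\<lambda>t::real. f (z + of_real t)) 0"

definition dy :: "(complex \<Rightarrow> real) \<Rightarrow> complex \<Rightarrow> real" where
  "dy f z = deriv (\<lambda>t::real. f (z + \<i> * of_real t)) 0"

text \<open>Delta = d^2/(dz dzbar) = (1/4)(d^2/dx^2 + d^2/dy^2).\<close>
definition Lap :: "(complex \<Rightarrow> real) \<Rightarrow> complex \<Rightarrow> real" where
  "Lap f z = (dx (dx f) z + dy (dy f) z) / 4"

coinductive smooth_on :: "complex set \<Rightarrow> (complex \<Rightarrow> real) \<Rightarrow> bool" where
  "f differentiable_on S \<Longrightarrow> smooth_on S (dx f) \<Longrightarrow> smooth_on S (dy f) \<Longrightarrow> smooth_on S f"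

coinductive smooth_real :: "(real \<Rightarrow> real) \<Rightarrow> bool" where
  "(\<forall>x. f differentiable (at x)) \<Longrightarrow> smooth_real (deriv f) \<Longrightarrow> smooth_real f"

text \<open>Test functions on the unit circle T, written in the angle variable:
  2pi-periodic C-infinity functions on the real line.\<close>
definition test_fun_T :: "(real \<Rightarrow> real) \<Rightarrow> bool" where
  "test_fun_T \<phi> \<longleftrightarrow> smooth_real \<phi> \<and> (\<forall>\<theta>. \<phi> (\<theta> + 2 * pi) = \<phi> \<theta>)"

definition pair_r :: "(complex \<Rightarrow> real) \<Rightarrow> real \<Rightarrow> (real \<Rightarrow> real) \<Rightarrow> real" where
  "pair_r u r \<phi> = integral {0..2*pi} (\<lambda>\<theta>. u (of_real r * cis \<theta>) * \<phi> \<theta>) / (2 * pi)"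

definition w :: "real \<Rightarrow> complex \<Rightarrow> real" where
  "w \<gamma> z = (1 - (cmod z)\<^sup>2) powr \<gamma>"

text \<open>H solves the Poisson-kernel problem for the weight w_gamma:
  smooth in D, Delta w^{-1} Delta H = 0 in D, H = 0 on T and d_n H = delta_1 on T (distributionally).\<close>
definition is_poisson_kernel :: "real \<Rightarrow> (complex \<Rightarrow> real) \<Rightarrow> bool" where
  "is_poisson_kernel \<gamma> H \<longleftrightarrow>
     smooth_on (ball 0 1) H \<and>
     (\<forall>z\<in>ball 0 1. Lap (\<lambda>\<zeta>. Lap H \<zeta> / w \<gamma> \<zeta>) z = 0) \<and>
     (\<forall>\<phi>. test_fun_T \<phi> \<longrightarrow> ((\<lambda>r. pair_r H r \<phi>) \<longlongrightarrow> 0) (at_left 1)) \<and>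
     (\<forall>\<phi>. test_fun_T \<phi> \<longrightarrow> ((\<lambda>r. (pair_r H r \<phi> - 0) / (1 - r)) \<longlongrightarrow> \<phi> 0) (at_left 1))"

end

theory Submission
  imports Defs "HOL-Complex_Analysis.Complex_Analysis" "HOL-Real_Asymp.Real_Asymp"
begin


definition Qf :: "complex \<Rightarrow> real" where "Qf z = (1 - Re z)\<^sup>2 + (Im z)\<^sup>2"

lemma Qf_pos: "z \<noteq> 1 \<Longrightarrow> Qf z > 0"
proof -
  assume "z \<noteq> 1"
  hence "Re z \<noteq> 1 \<or> Im z \<noteq> 0" by (metis complex_eqI one_complex.simps)
  thus ?thesis unfolding Qf_def by (auto simp: add_pos_nonneg add_nonneg_pos)
qed

lemma Qf_cmod: "Qf z = (cmod (1 - z))\<^sup>2"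
  unfolding Qf_def cmod_power2 by simp

inductive rf :: "(complex \<Rightarrow> real) \<Rightarrow> bool" where
  rf_const: "rf (\<lambda>z. c)"
| rf_Re: "rf Re"
| rf_Im: "rf Im"
| rf_invQ: "rf (\<lambda>z. 1 / Qf z)"
| rf_add: "rf f \<Longrightarrow> rf g \<Longrightarrow> rf (\<lambda>z. f z + g z)"
| rf_mult: "rf f \<Longrightarrow> rf g \<Longrightarrow> rf (\<lambda>z. f z * g z)"

lemma rf_power: "rf f \<Longrightarrow> rf (\<lambda>z. f z ^ n)"
  by (induction n) (auto intro: rf.intros)

lemma rf_diff: assumes "rf f" "rf g" shows "rf (\<lambda>z. f z - g z)"
proof -
  have "rf (\<lambda>z. f z + (-1) * g z)" by (rule rf_add[OF assms(1) rf_mult[OF rf_const assms(2)]])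
  then show ?thesis by simp
qed

lemma Qf_differentiable: "Qf differentiable (at z)"
  unfolding Qf_def by (intro derivative_intros) (auto intro!: bounded_linear_imp_differentiable bounded_linear_Re bounded_linear_Im)

lemma rf_differentiable: "rf f \<Longrightarrow> z \<noteq> 1 \<Longrightarrow> f differentiable (at z)"
proof (induction rule: rf.induct)
  case (rf_const c) then show ?case by simp
next
  case rf_Re then show ?case by (intro bounded_linear_imp_differentiable bounded_linear_Re)
next
  case rf_Im then show ?case by (intro bounded_linear_imp_differentiable bounded_linear_Im)
next
  case rf_invQ then show ?case
    using Qf_pos[of z] by (intro differentiable_divide Qf_differentiable) auto
next
  case (rf_add f g) then show ?case by (intro differentiable_add) auto
next
  case (rf_mult f g) then show ?case by (intro differentiable_mult) auto
qed

lemma Qf_dx: "((\<lambda>t. Qf (z + of_real t)) has_real_derivative (-2 * (1 - Re z))) (at 0)"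
  unfolding Qf_def by (auto intro!: derivative_eq_intros)

lemma Qf_dy: "((\<lambda>t. Qf (z + \<i> * of_real t)) has_real_derivative (2 * Im z)) (at 0)"
  unfolding Qf_def by (auto intro!: derivative_eq_intros)

lemma rf_dx: "rf f \<Longrightarrow> \<exists>g. rf g \<and> (\<forall>z. z \<noteq> 1 \<longrightarrow> ((\<lambda>t. f (z + of_real t)) has_real_derivative g z) (at 0))"
proof (induction rule: rf.induct)
  case (rf_const c) then show ?case by (rule exI[of _ "\<lambda>z. 0"]) (auto intro: rf.intros)
next
  case rf_Re then show ?case by (rule exI[of _ "\<lambda>z. 1"]) (auto intro!: rf.intros derivative_eq_intros)
next
  case rf_Im then show ?case by (rule exI[of _ "\<lambda>z. 0"]) (auto intro!: rf.intros derivative_eq_intros)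
next
  case rf_invQ
  have "rf (\<lambda>z. (2 * (1 - Re z)) * ((1 / Qf z) * (1 / Qf z)))"
    by (intro rf.intros rf_diff)
  moreover have "((\<lambda>t. 1 / Qf (z + of_real t)) has_real_derivative (2 * (1 - Re z)) * ((1 / Qf z) * (1 / Qf z))) (at 0)"
    if "z \<noteq> 1" for z
    using Qf_pos[OF that]
    by (auto intro!: derivative_eq_intros Qf_dx simp: field_simps power2_eq_square)
  ultimately show ?case by blast
next
  case (rf_add f g)
  then obtain f' g' where "rf f'" "rf g'" and d: "\<forall>z. z \<noteq> 1 \<longrightarrow> ((\<lambda>t. f (z + of_real t)) has_real_derivative f' z) (at 0)"
     "\<forall>z. z \<noteq> 1 \<longrightarrow> ((\<lambda>t. g (z + of_real t)) has_real_derivative g' z) (at 0)" by blast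
  show ?case
  proof (intro exI[of _ "\<lambda>z. f' z + g' z"] conjI allI impI)
    show "rf (\<lambda>z. f' z + g' z)" using \<open>rf f'\<close> \<open>rf g'\<close> by (auto intro!: rf.intros)
    fix z :: complex assume "z \<noteq> 1"
    thus "((\<lambda>t. f (z + of_real t) + g (z + of_real t)) has_real_derivative f' z + g' z) (at 0)"
      using d by (auto intro!: derivative_eq_intros)
  qed
next
  case (rf_mult f g)
  then obtain f' g' where "rf f'" "rf g'" and d: "\<forall>z. z \<noteq> 1 \<longrightarrow> ((\<lambda>t. f (z + of_real t)) has_real_derivative f' z) (at 0)"
     "\<forall>z. z \<noteq> 1 \<longrightarrow> ((\<lambda>t. g (z + of_real t)) has_real_derivative g' z) (at 0)" by blast
  show ?case
  proof (intro exI[of _ "\<lambda>z. f' z * g z + f z * g' z"] conjI allI impI)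
    show "rf (\<lambda>z. f' z * g z + f z * g' z)" using \<open>rf f'\<close> \<open>rf g'\<close> rf_mult by (auto intro!: rf.intros)
    fix z :: complex assume "z \<noteq> 1"
    thus "((\<lambda>t. f (z + of_real t) * g (z + of_real t)) has_real_derivative f' z * g z + f z * g' z) (at 0)"
      using d by (auto intro!: derivative_eq_intros)
  qed
qed

lemma rf_dy: "rf f \<Longrightarrow> \<exists>g. rf g \<and> (\<forall>z. z \<noteq> 1 \<longrightarrow> ((\<lambda>t. f (z + \<i> * of_real t)) has_real_derivative g z) (at 0))"
proof (induction rule: rf.induct)
  case (rf_const c) then show ?case by (rule exI[of _ "\<lambda>z. 0"]) (auto intro: rf.intros)
next
  case rf_Re then show ?case by (rule exI[of _ "\<lambda>z. 0"]) (auto intro!: rf.intros derivative_eq_intros)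
next
  case rf_Im then show ?case by (rule exI[of _ "\<lambda>z. 1"]) (auto intro!: rf.intros derivative_eq_intros)
next
  case rf_invQ
  have "rf (\<lambda>z. (-2 * Im z) * ((1 / Qf z) * (1 / Qf z)))"
    by (intro rf.intros)
  moreover have "((\<lambda>t. 1 / Qf (z + \<i> * of_real t)) has_real_derivative (-2 * Im z) * ((1 / Qf z) * (1 / Qf z))) (at 0)"
    if "z \<noteq> 1" for z
    using Qf_pos[OF that]
    by (auto intro!: derivative_eq_intros Qf_dy simp: field_simps power2_eq_square)
  ultimately show ?case by blast
next
  case (rf_add f g)
  then obtain f' g' where "rf f'" "rf g'" and d: "\<forall>z. z \<noteq> 1 \<longrightarrow> ((\<lambda>t. f (z + \<i> * of_real t)) has_real_derivative f' z) (at 0)"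
     "\<forall>z. z \<noteq> 1 \<longrightarrow> ((\<lambda>t. g (z + \<i> * of_real t)) has_real_derivative g' z) (at 0)" by blast
  show ?case
  proof (intro exI[of _ "\<lambda>z. f' z + g' z"] conjI allI impI)
    show "rf (\<lambda>z. f' z + g' z)" using \<open>rf f'\<close> \<open>rf g'\<close> by (auto intro!: rf.intros)
    fix z :: complex assume "z \<noteq> 1"
    thus "((\<lambda>t. f (z + \<i> * of_real t) + g (z + \<i> * of_real t)) has_real_derivative f' z + g' z) (at 0)"
      using d by (auto intro!: derivative_eq_intros)
  qed
next
  case (rf_mult f g)
  then obtain f' g' where "rf f'" "rf g'" and d: "\<forall>z. z \<noteq> 1 \<longrightarrow> ((\<lambda>t. f (z + \<i> * of_real t)) has_real_derivative f' z) (at 0)"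
     "\<forall>z. z \<noteq> 1 \<longrightarrow> ((\<lambda>t. g (z + \<i> * of_real t)) has_real_derivative g' z) (at 0)" by blast
  show ?case
  proof (intro exI[of _ "\<lambda>z. f' z * g z + f z * g' z"] conjI allI impI)
    show "rf (\<lambda>z. f' z * g z + f z * g' z)" using \<open>rf f'\<close> \<open>rf g'\<close> rf_mult by (auto intro!: rf.intros)
    fix z :: complex assume "z \<noteq> 1"
    thus "((\<lambda>t. f (z + \<i> * of_real t) * g (z + \<i> * of_real t)) has_real_derivative f' z * g z + f z * g' z) (at 0)"
      using d by (auto intro!: derivative_eq_intros)
  qed
qed

lemma ev_line: 
  fixes z c :: complex
  assumes "open S" "z \<in> S" "\<forall>\<zeta>\<in>S. f \<zeta> = g \<zeta>"
  shows "eventually (\<lambda>t. f (z + c * of_real t) = g (z + c * of_real t)) (nhds 0)"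
proof -
  obtain e where e: "e > 0" "ball z e \<subseteq> S" using assms(1,2) openE by blast
  have "eventually (\<lambda>t::real. dist t 0 < e / (cmod c + 1)) (nhds 0)"
    using e(1) by (intro eventually_nhds_metric[THEN iffD2]) (auto intro!: exI[of _ "e / (cmod c + 1)"] divide_pos_pos add_nonneg_pos)
  thus ?thesis
  proof eventually_elim
    case (elim t)
    have "cmod (c * of_real t) = cmod c * \<bar>t\<bar>" by (simp add: norm_mult)
    also have "\<dots> \<le> (cmod c + 1) * \<bar>t\<bar>" by (intro mult_right_mono) auto
    also have "\<dots> < e"
    proof -
      have "\<bar>t\<bar> < e / (cmod c + 1)" using elim by (simp add: dist_real_def)
      thus ?thesis by (simp add: pos_less_divide_eq add_nonneg_pos mult.commute)
    qed
    finally have "z + c * of_real t \<in> ball z e" by (simp add: dist_norm)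
    thus ?case using e(2) assms(3) by auto
  qed
qed

lemma dx_local: "open S \<Longrightarrow> z \<in> S \<Longrightarrow> (\<forall>\<zeta>\<in>S. f \<zeta> = g \<zeta>) \<Longrightarrow> dx f z = dx g z"
  unfolding dx_def using ev_line[of S z f g 1] by (intro deriv_cong_ev) auto

lemma dy_local: "open S \<Longrightarrow> z \<in> S \<Longrightarrow> (\<forall>\<zeta>\<in>S. f \<zeta> = g \<zeta>) \<Longrightarrow> dy f z = dy g z"
  unfolding dy_def using ev_line[of S z f g \<i>] by (intro deriv_cong_ev) auto

lemma rf_smooth:
  assumes "rf g" "\<forall>z\<in>ball 0 1. f z = g z"
  shows "smooth_on (ball 0 1) f"
proof -
  define X where "X S f \<longleftrightarrow> S = ball 0 1 \<and> (\<exists>g. rf g \<and> (\<forall>z\<in>S. f z = g z))" for S f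
  have "X (ball 0 1) f" using assms unfolding X_def by blast
  then show ?thesis
  proof (rule smooth_on.coinduct[of X])
    fix S f assume "X S f"
    then obtain g where S: "S = ball 0 1" and g: "rf g" "\<forall>z\<in>S. f z = g z" unfolding X_def by blast
    have ne: "z \<noteq> 1" if "z \<in> S" for z using that S by auto
    have "f differentiable_on S"
    proof -
      { fix z assume z: "z \<in> S"
        then obtain D where "(g has_derivative D) (at z)" using rf_differentiable[OF g(1) ne[OF z]]
          unfolding differentiable_def by blast
        hence "(f has_derivative D) (at z)"
          by (rule has_derivative_transform_within_open[of g D z UNIV S f]) (use z g S in auto)
        hence "f differentiable at z within S" unfolding differentiable_def by (blast intro: has_derivative_at_withinI) }
      thus ?thesis unfolding differentiable_on_def by blast
    qed
    moreover have "X S (dx f)"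
    proof -
      obtain g' where g': "rf g'" "\<forall>z. z \<noteq> 1 \<longrightarrow> ((\<lambda>t. g (z + of_real t)) has_real_derivative g' z) (at 0)"
        using rf_dx[OF g(1)] by blast
      have "\<forall>z\<in>S. dx f z = g' z"
      proof
        fix z assume z: "z \<in> S"
        have "dx f z = dx g z" using dx_local[of S z f g] z g S by auto
        also have "\<dots> = g' z" unfolding dx_def using g'(2) ne[OF z] by (auto intro: DERIV_imp_deriv)
        finally show "dx f z = g' z" .
      qed
      thus ?thesis unfolding X_def using S g' by blast
    qed
    moreover have "X S (dy f)"
    proof -
      obtain g' where g': "rf g'" "\<forall>z. z \<noteq> 1 \<longrightarrow> ((\<lambda>t. g (z + \<i> * of_real t)) has_real_derivative g' z) (at 0)"
        using rf_dy[OF g(1)] by blast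
      have "\<forall>z\<in>S. dy f z = g' z"
      proof
        fix z assume z: "z \<in> S"
        have "dy f z = dy g z" using dy_local[of S z f g] z g S by auto
        also have "\<dots> = g' z" unfolding dy_def using g'(2) ne[OF z] by (auto intro: DERIV_imp_deriv)
        finally show "dy f z = g' z" .
      qed
      thus ?thesis unfolding X_def using S g' by blast
    qed
    ultimately show "\<exists>f' S'. S = S' \<and> f = f' \<and> f' differentiable_on S' \<and>
          (X S' (dx f') \<or> smooth_on S' (dx f')) \<and> (X S' (dy f') \<or> smooth_on S' (dy f'))" by blast
  qed
qed

definition HH :: "complex \<Rightarrow> real" where
  "HH = (\<lambda>z.
      (1/2) * (1 - (cmod z)\<^sup>2) ^ 4 / (cmod (1 - z))\<^sup>2
    + (1/2) * (1 - (cmod z)\<^sup>2) ^ 5 / (cmod (1 - z)) ^ 4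
    - (1/4) * (1 - (cmod z)\<^sup>2) ^ 4 / (cmod (1 - z)) ^ 4
    + (1/6) * (1 - (cmod z)\<^sup>2) ^ 6 / (cmod (1 - z)) ^ 6)"

lemma HH_smooth: "smooth_on (ball 0 1) HH"
proof (rule rf_smooth)
  define A where "A z = 1 - (Re z)\<^sup>2 - (Im z)\<^sup>2" for z
  define I where "I z = 1 / Qf z" for z
  have rA: "rf A" unfolding A_def by (intro rf_diff rf_power rf.intros)
  have rI: "rf I" unfolding I_def by (rule rf_invQ)
  let ?g = "\<lambda>z. (1/2) * A z ^ 4 * I z + (1/2) * A z ^ 5 * I z ^ 2 - (1/4) * A z ^ 4 * I z ^ 2 + (1/6) * A z ^ 6 * I z ^ 3"
  show "rf ?g" using rA rI by (intro rf_diff rf_add rf_mult rf_power rf.intros) 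
  show "\<forall>z\<in>ball 0 1. HH z = ?g z"
  proof
    fix z :: complex assume "z \<in> ball 0 1"
    have c1: "(cmod z)\<^sup>2 = (Re z)\<^sup>2 + (Im z)\<^sup>2" by (simp add: cmod_power2)
    have c2: "(cmod (1 - z))\<^sup>2 = Qf z" by (simp add: Qf_cmod)
    have c4: "(cmod (1 - z)) ^ 4 = (Qf z)^2" by (simp add: Qf_cmod flip: power_mult)
    have c6: "(cmod (1 - z)) ^ 6 = (Qf z)^3" by (simp add: Qf_cmod flip: power_mult)
    show "HH z = ?g z" unfolding HH_def c2 c4 c6 c1 A_def I_def by (simp add: field_simps)
  qed
qed




definition Az :: "complex \<Rightarrow> real" where "Az z = 1 - (Re z)\<^sup>2 - (Im z)\<^sup>2"

definition Uf :: "complex \<Rightarrow> real" where "Uf z = 1 / Qf z"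

definition Phi :: "real \<Rightarrow> real \<Rightarrow> real" where
 "Phi a u = (1/2) * a ^ 4 * u + (1/2) * a ^ 5 * u ^ 2 - (1/4) * a ^ 4 * u ^ 2 + (1/6) * a ^ 6 * u ^ 3"
definition Pa :: "real \<Rightarrow> real \<Rightarrow> real" where
 "Pa a u = 2*a^3*u + (5/2)*a^4*u^2 - a^3*u^2 + a^5*u^3"
definition Pu :: "real \<Rightarrow> real \<Rightarrow> real" where
 "Pu a u = (1/2)*a^4 + a^5*u - (1/2)*a^4*u + (1/2)*a^6*u^2"
definition Paa :: "real \<Rightarrow> real \<Rightarrow> real" where
 "Paa a u = 6*a^2*u + 10*a^3*u^2 - 3*a^2*u^2 + 5*a^4*u^3"
definition Pau :: "real \<Rightarrow> real \<Rightarrow> real" where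
 "Pau a u = 2*a^3 + 5*a^4*u - 2*a^3*u + 3*a^5*u^2"
definition Puu :: "real \<Rightarrow> real \<Rightarrow> real" where
 "Puu a u = a^5 - (1/2)*a^4 + a^6*u"

lemma HH_Phi: "HH z = Phi (Az z) (Uf z)"
proof -
  have c1: "(cmod z)\<^sup>2 = (Re z)\<^sup>2 + (Im z)\<^sup>2" by (simp add: cmod_power2)
  have c2: "(cmod (1 - z))\<^sup>2 = Qf z" by (simp add: Qf_cmod)
  have c4: "(cmod (1 - z)) ^ 4 = (Qf z)^2" by (simp add: Qf_cmod flip: power_mult)
  have c6: "(cmod (1 - z)) ^ 6 = (Qf z)^3" by (simp add: Qf_cmod flip: power_mult)
  show ?thesis unfolding HH_def Phi_def c1 c2 c4 c6 Az_def Uf_def by (simp add: diff_diff_eq power_one_over)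
qed

lemma Uf_dx: "z \<noteq> 1 \<Longrightarrow> ((\<lambda>t. Uf (z + of_real t)) has_real_derivative (2 * (1 - Re z) * (Uf z)^2)) (at 0)"
  unfolding Uf_def using Qf_pos[of z]
  by (auto intro!: derivative_eq_intros Qf_dx simp: field_simps power2_eq_square)
lemma Uf_dy: "z \<noteq> 1 \<Longrightarrow> ((\<lambda>t. Uf (z + \<i> * of_real t)) has_real_derivative (-2 * Im z * (Uf z)^2)) (at 0)"
  unfolding Uf_def using Qf_pos[of z]
  by (auto intro!: derivative_eq_intros Qf_dy simp: field_simps power2_eq_square)

lemma Az_dx: "((\<lambda>t. Az (z + of_real t)) has_real_derivative (-2 * Re z)) (at 0)"
  unfolding Az_def by (auto intro!: derivative_eq_intros)
lemma Az_dy: "((\<lambda>t. Az (z + \<i> * of_real t)) has_real_derivative (-2 * Im z)) (at 0)"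
  unfolding Az_def by (auto intro!: derivative_eq_intros)

definition Hx :: "complex \<Rightarrow> real" where
  "Hx z = Pa (Az z) (Uf z) * (-2 * Re z) + Pu (Az z) (Uf z) * (2 * (1 - Re z) * (Uf z)^2)"
definition Hy :: "complex \<Rightarrow> real" where
  "Hy z = Pa (Az z) (Uf z) * (-2 * Im z) + Pu (Az z) (Uf z) * (-2 * Im z * (Uf z)^2)"

lemma HH_dx: "z \<noteq> 1 \<Longrightarrow> ((\<lambda>t. HH (z + of_real t)) has_real_derivative Hx z) (at 0)"
  unfolding HH_Phi Phi_def Hx_def Pa_def Pu_def
  by (auto intro!: derivative_eq_intros Az_dx Uf_dx) (simp add: field_simps)
lemma HH_dy: "z \<noteq> 1 \<Longrightarrow> ((\<lambda>t. HH (z + \<i> * of_real t)) has_real_derivative Hy z) (at 0)"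
  unfolding HH_Phi Phi_def Hy_def Pa_def Pu_def
  by (auto intro!: derivative_eq_intros Az_dy Uf_dy) (simp add: field_simps)

definition Hxx :: "complex \<Rightarrow> real" where
  "Hxx z = (Paa (Az z) (Uf z) * (-2 * Re z) + Pau (Az z) (Uf z) * (2 * (1 - Re z) * (Uf z)^2)) * (-2 * Re z)
     + Pa (Az z) (Uf z) * (-2)
     + (Pau (Az z) (Uf z) * (-2 * Re z) + Puu (Az z) (Uf z) * (2 * (1 - Re z) * (Uf z)^2)) * (2 * (1 - Re z) * (Uf z)^2)
     + Pu (Az z) (Uf z) * (-2 * (Uf z)^2 + 2 * (1 - Re z) * (2 * Uf z * (2 * (1 - Re z) * (Uf z)^2)))"
definition Hyy :: "complex \<Rightarrow> real" where
  "Hyy z = (Paa (Az z) (Uf z) * (-2 * Im z) + Pau (Az z) (Uf z) * (-2 * Im z * (Uf z)^2)) * (-2 * Im z)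
     + Pa (Az z) (Uf z) * (-2)
     + (Pau (Az z) (Uf z) * (-2 * Im z) + Puu (Az z) (Uf z) * (-2 * Im z * (Uf z)^2)) * (-2 * Im z * (Uf z)^2)
     + Pu (Az z) (Uf z) * (-2 * (Uf z)^2 - 2 * Im z * (2 * Uf z * (-2 * Im z * (Uf z)^2)))"

lemma Hx_dx: "z \<noteq> 1 \<Longrightarrow> ((\<lambda>t. Hx (z + of_real t)) has_real_derivative Hxx z) (at 0)"
  unfolding Hx_def Hxx_def Pa_def Pu_def Paa_def Pau_def Puu_def
  by (auto intro!: derivative_eq_intros Az_dx Uf_dx) (simp add: field_simps)
lemma Hy_dy: "z \<noteq> 1 \<Longrightarrow> ((\<lambda>t. Hy (z + \<i> * of_real t)) has_real_derivative Hyy z) (at 0)"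
  unfolding Hy_def Hyy_def Pa_def Pu_def Paa_def Pau_def Puu_def
  by (auto intro!: derivative_eq_intros Az_dy Uf_dy) (simp add: field_simps)

definition Gf :: "real \<Rightarrow> real \<Rightarrow> real" where
  "Gf a u = 3/2 - 3 * ((a*u+1)^4/2 - 2*u*(a*u+1)^2 + u^2)"

lemma key_identity:
  fixes a u x y :: real
  assumes ha: "a = 1 - x\<^sup>2 - y\<^sup>2" and hq: "u * ((1-x)\<^sup>2 + y\<^sup>2) = 1"
  shows "(Paa a u * (-2 * x) + Pau a u * (2 * (1 - x) * u^2)) * (-2 * x)
     + Pa a u * (-2)
     + (Pau a u * (-2 * x) + Puu a u * (2 * (1 - x) * u^2)) * (2 * (1 - x) * u^2)
     + Pu a u * (-2 * u^2 + 2 * (1 - x) * (2 * u * (2 * (1 - x) * u^2)))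
   + ((Paa a u * (-2 * y) + Pau a u * (-2 * y * u^2)) * (-2 * y)
     + Pa a u * (-2)
     + (Pau a u * (-2 * y) + Puu a u * (-2 * y * u^2)) * (-2 * y * u^2)
     + Pu a u * (-2 * u^2 - 2 * y * (2 * u * (-2 * y * u^2))))
   = 4 * a^2 * Gf a u"
proof -
  define q where "q = (1-x)\<^sup>2 + y\<^sup>2"
  have hq': "u * q = 1" using hq q_def by simp
  have e1: "?thesis \<longleftrightarrow> 4 * (x\<^sup>2+y\<^sup>2) * Paa a u + 8 * (u^2 * (x\<^sup>2+y\<^sup>2-x)) * Pau a u + 4 * (u^3 * (u * q)) * Puu a u
      - 4 * Pa a u + Pu a u * (-4 * u^2 + 8 * (u^2 * (u * q))) = 4 * a^2 * Gf a u"
    unfolding q_def by (simp add: field_simps power2_eq_square power3_eq_cube) 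
  have s1: "x\<^sup>2+y\<^sup>2 = 1 - a" using ha by simp
  have "x = (2 - a - q) / 2" using ha q_def by (simp add: field_simps power2_eq_square)
  hence "u^2 * (x\<^sup>2+y\<^sup>2-x) = u^2 * ((1 - a) - (2 - a - q) / 2)" using s1 by simp
  also have "\<dots> = (u * (u * q) - a * u^2) / 2" by (simp add: field_simps power2_eq_square)
  finally have s4: "u^2 * (x\<^sup>2+y\<^sup>2-x) = (u - a * u^2) / 2" using hq' by simp
  show ?thesis unfolding e1 unfolding s4 unfolding s1 hq'
    unfolding Pa_def Pu_def Paa_def Pau_def Puu_def Gf_def by algebra
qed

lemma dx_HH: "z \<noteq> 1 \<Longrightarrow> dx HH z = Hx z"
  unfolding dx_def using HH_dx by (rule DERIV_imp_deriv)
lemma dy_HH: "z \<noteq> 1 \<Longrightarrow> dy HH z = Hy z"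
  unfolding dy_def using HH_dy by (rule DERIV_imp_deriv)

lemma Lap_HH_raw: "z \<noteq> 1 \<Longrightarrow> Lap HH z = (Hxx z + Hyy z) / 4"
proof -
  assume z: "z \<noteq> 1"
  have o: "open (UNIV - {1::complex})" by auto
  have "dx (dx HH) z = dx Hx z" using dx_local[OF o, of z "dx HH" Hx] z dx_HH by auto
  also have "\<dots> = Hxx z" unfolding dx_def using Hx_dx[OF z] by (rule DERIV_imp_deriv)
  finally have 1: "dx (dx HH) z = Hxx z" .
  have "dy (dy HH) z = dy Hy z" using dy_local[OF o, of z "dy HH" Hy] z dy_HH by auto
  also have "\<dots> = Hyy z" unfolding dy_def using Hy_dy[OF z] by (rule DERIV_imp_deriv)
  finally have 2: "dy (dy HH) z = Hyy z" .
  show ?thesis unfolding Lap_def 1 2 ..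
qed

lemma Lap_HH: "z \<noteq> 1 \<Longrightarrow> Lap HH z = (Az z)^2 * Gf (Az z) (Uf z)"
proof -
  assume z: "z \<noteq> 1"
  have "Qf z \<noteq> 0" using Qf_pos[OF z] by simp
  hence "Uf z * Qf z = 1" unfolding Uf_def by simp
  hence hq: "Uf z * ((1 - Re z)\<^sup>2 + (Im z)\<^sup>2) = 1" unfolding Qf_def .
  have "Hxx z + Hyy z = 4 * (Az z)^2 * Gf (Az z) (Uf z)"
    unfolding Hxx_def Hyy_def by (rule key_identity[OF Az_def hq])
  thus ?thesis using Lap_HH_raw[OF z] by simp
qed

lemma G_identity:
  fixes a u x y :: real
  assumes ha: "a = 1 - x\<^sup>2 - y\<^sup>2" and hq: "u * ((1-x)\<^sup>2 + y\<^sup>2) = 1"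
  shows "(((1-x)\<^sup>2 - y\<^sup>2)\<^sup>2 - 4 * (1-x)\<^sup>2 * y\<^sup>2) * u^4 = (a*u+1)^4/2 - 2*u*(a*u+1)^2 + u^2"
  using assms by algebra

lemma Re_inv4: "z \<noteq> 1 \<Longrightarrow> Re (1 / (1 - z)^4) = (((1-Re z)\<^sup>2 - (Im z)\<^sup>2)\<^sup>2 - 4 * (1-Re z)\<^sup>2 * (Im z)\<^sup>2) * (Uf z)^4"
proof -
  assume z: "z \<noteq> 1"
  have e: "(1 - z)^4 = ((1-z)\<^sup>2)\<^sup>2" by (simp flip: power_mult)
  have "Re (((1-z)\<^sup>2)\<^sup>2) = ((1-Re z)\<^sup>2 - (Im z)\<^sup>2)\<^sup>2 - 4 * (1-Re z)\<^sup>2 * (Im z)\<^sup>2"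
    unfolding Re_power2[of "(1-z)\<^sup>2"] Im_power2[of "1-z"] Re_power2[of "1-z"] by (simp add: power_mult_distrib power2_eq_square algebra_simps)
  hence "Re ((1 - z)^4) = ((1-Re z)\<^sup>2 - (Im z)\<^sup>2)\<^sup>2 - 4 * (1-Re z)\<^sup>2 * (Im z)\<^sup>2" unfolding e .
  moreover have "(cmod ((1 - z)^4))\<^sup>2 = (Qf z)^4" by (simp add: Qf_cmod norm_power flip: power_mult)
  moreover have "Re (1/(1-z)^4) = Re ((1-z)^4) / (cmod ((1-z)^4))\<^sup>2" by (simp add: Re_divide cmod_power2)
  ultimately show ?thesis unfolding Uf_def by (simp add: power_one_over)
qed

definition Gc :: "complex \<Rightarrow> real" where "Gc z = Re (3/2 - 3 / (1 - z)^4)"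

lemma Gc_Gf: "z \<noteq> 1 \<Longrightarrow> Gc z = Gf (Az z) (Uf z)"
proof -
  assume z: "z \<noteq> 1"
  have "Qf z \<noteq> 0" using Qf_pos[OF z] by simp
  hence "Uf z * Qf z = 1" unfolding Uf_def by simp
  hence hq: "Uf z * ((1 - Re z)\<^sup>2 + (Im z)\<^sup>2) = 1" unfolding Qf_def .
  have "Gc z = 3/2 - 3 * Re (1 / (1 - z)^4)" unfolding Gc_def by (simp add: Re_divide)
  also have "\<dots> = Gf (Az z) (Uf z)" unfolding Re_inv4[OF z] G_identity[OF Az_def hq] Gf_def ..
  finally show ?thesis .
qed

lemma Re_line_dx:
  assumes "(F has_field_derivative D) (at z)"
  shows "((\<lambda>t. Re (F (z + of_real t))) has_real_derivative Re D) (at 0)"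
proof -
  have g: "((\<lambda>w. z + w) has_field_derivative 1) (at (of_real 0))" by (auto intro!: derivative_eq_intros)
  have f: "(F has_field_derivative D) (at ((\<lambda>w. z + w) (of_real 0)))" using assms by simp
  have "((\<lambda>w. F (z + w)) has_field_derivative D) (at (of_real 0))"
    using DERIV_chain2[OF f g] by simp
  hence "((\<lambda>t. F (z + of_real t)) has_vector_derivative D) (at 0)" by (rule has_vector_derivative_real_field)
  thus ?thesis by (rule has_field_derivative_Re)
qed

lemma Re_line_dy:
  assumes "(F has_field_derivative D) (at z)"
  shows "((\<lambda>t. Re (F (z + \<i> * of_real t))) has_real_derivative Re (\<i> * D)) (at 0)"
proof -
  have g: "((\<lambda>w. z + \<i> * w) has_field_derivative \<i>) (at (of_real 0))" by (auto intro!: derivative_eq_intros)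
  have f: "(F has_field_derivative D) (at ((\<lambda>w. z + \<i> * w) (of_real 0)))" using assms by simp
  have "((\<lambda>w. F (z + \<i> * w)) has_field_derivative D * \<i>) (at (of_real 0))"
    using DERIV_chain2[OF f g] by simp
  hence "((\<lambda>t. F (z + \<i> * of_real t)) has_vector_derivative D * \<i>) (at 0)" by (rule has_vector_derivative_real_field)
  hence "((\<lambda>t. Re (F (z + \<i> * of_real t))) has_real_derivative Re (D * \<i>)) (at 0)" by (rule has_field_derivative_Re)
  thus ?thesis by (simp add: mult.commute)
qed

lemma Lap_Re_holo:
  assumes d1: "\<And>z. z \<noteq> 1 \<Longrightarrow> (F has_field_derivative Fa z) (at z)"
      and d2: "\<And>z. z \<noteq> 1 \<Longrightarrow> (Fa has_field_derivative Fb z) (at z)"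
      and z: "z \<noteq> 1"
  shows "Lap (\<lambda>z. Re (F z)) z = 0"
proof -
  have o: "open (UNIV - {1::complex})" by auto
  have a: "dx (\<lambda>z. Re (F z)) \<zeta> = Re (Fa \<zeta>)" if "\<zeta> \<noteq> 1" for \<zeta>
    unfolding dx_def using Re_line_dx[OF d1[OF that]] by (rule DERIV_imp_deriv)
  have b: "dy (\<lambda>z. Re (F z)) \<zeta> = Re (\<i> * Fa \<zeta>)" if "\<zeta> \<noteq> 1" for \<zeta>
    unfolding dy_def using Re_line_dy[OF d1[OF that]] by (rule DERIV_imp_deriv)
  have "dx (dx (\<lambda>z. Re (F z))) z = dx (\<lambda>z. Re (Fa z)) z" using dx_local[OF o, of z] z a by auto
  also have "\<dots> = Re (Fb z)" unfolding dx_def using Re_line_dx[OF d2[OF z]] by (rule DERIV_imp_deriv)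
  finally have 1: "dx (dx (\<lambda>z. Re (F z))) z = Re (Fb z)" .
  have d3: "((\<lambda>z. \<i> * Fa z) has_field_derivative \<i> * Fb \<zeta>) (at \<zeta>)" if "\<zeta> \<noteq> 1" for \<zeta>
    using d2[OF that] by (auto intro!: derivative_eq_intros)
  have "dy (dy (\<lambda>z. Re (F z))) z = dy (\<lambda>z. Re (\<i> * Fa z)) z" using dy_local[OF o, of z] z b by auto
  also have "\<dots> = Re (\<i> * (\<i> * Fb z))" unfolding dy_def using Re_line_dy[OF d3[OF z]] by (rule DERIV_imp_deriv)
  finally have 2: "dy (dy (\<lambda>z. Re (F z))) z = - Re (Fb z)" by simp
  show ?thesis unfolding Lap_def 1 2 by simp
qed

lemma Lap_Gc: "z \<noteq> 1 \<Longrightarrow> Lap Gc z = 0"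
proof -
  assume z: "z \<noteq> 1"
  have e: "Gc = (\<lambda>z. Re (3/2 - 3 / (1 - z)^4))" unfolding Gc_def ..
  show ?thesis unfolding e
  proof (rule Lap_Re_holo[where Fa = "\<lambda>z. - 12 / (1 - z)^5" and Fb = "\<lambda>z. - 60 / (1 - z)^6"])
    fix w :: complex assume w: "w \<noteq> 1"
    hence w': "1 - w \<noteq> 0" by auto
    show "((\<lambda>z. 3/2 - 3 / (1 - z)^4) has_field_derivative - 12 / (1 - w)^5) (at w)"
      using w' by (auto intro!: derivative_eq_intros) (simp add: divide_simps)
    show "((\<lambda>z. - 12 / (1 - z)^5) has_field_derivative - 60 / (1 - w)^6) (at w)"
      using w' by (auto intro!: derivative_eq_intros) (simp add: divide_simps)
  qed (rule z)
qed

lemma Lap_local: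
  assumes "open S" "z \<in> S" "\<forall>\<zeta>\<in>S. f \<zeta> = g \<zeta>"
  shows "Lap f z = Lap g z"
proof -
  have "\<forall>\<zeta>\<in>S. dx f \<zeta> = dx g \<zeta>" using dx_local[OF assms(1) _ assms(3)] by blast
  hence 1: "dx (dx f) z = dx (dx g) z" using dx_local[OF assms(1,2)] by blast
  have "\<forall>\<zeta>\<in>S. dy f \<zeta> = dy g \<zeta>" using dy_local[OF assms(1) _ assms(3)] by blast
  hence 2: "dy (dy f) z = dy (dy g) z" using dy_local[OF assms(1,2)] by blast
  show ?thesis unfolding Lap_def 1 2 ..
qed

lemma HH_pde: "\<forall>z\<in>ball 0 1. Lap (\<lambda>\<zeta>. Lap HH \<zeta> / w 2 \<zeta>) z = 0"
proof
  fix z :: complex assume z: "z \<in> ball 0 1"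
  have eq: "\<forall>\<zeta>\<in>ball 0 1. Lap HH \<zeta> / w 2 \<zeta> = Gc \<zeta>"
  proof
    fix \<zeta> :: complex assume \<zeta>: "\<zeta> \<in> ball 0 1"
    hence n1: "\<zeta> \<noteq> 1" by auto
    have "cmod \<zeta> < 1" using \<zeta> by simp
    hence "(cmod \<zeta>)\<^sup>2 < 1" by (simp add: power_less_one_iff abs_square_less_1)
    hence apos: "Az \<zeta> > 0" unfolding Az_def by (simp add: cmod_power2)
    have "w 2 \<zeta> = (Az \<zeta>)^2" unfolding w_def Az_def using apos 
      by (simp add: cmod_power2 powr_numeral Az_def diff_diff_eq)
    thus "Lap HH \<zeta> / w 2 \<zeta> = Gc \<zeta>" using Lap_HH[OF n1] Gc_Gf[OF n1] apos by simp
  qed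
  have "Lap (\<lambda>\<zeta>. Lap HH \<zeta> / w 2 \<zeta>) z = Lap Gc z" by (rule Lap_local[OF _ z eq]) auto
  also have "\<dots> = 0" using z by (intro Lap_Gc) auto
  finally show "Lap (\<lambda>\<zeta>. Lap HH \<zeta> / w 2 \<zeta>) z = 0" .
qed




lemma Re_ofreal_mult: "Re (complex_of_real c * y) = c * Re y"
  by simp

lemma cnj_circle: "cmod v = r \<Longrightarrow> r > 0 \<Longrightarrow> cnj v = of_real (r^2) / v"
proof -
  assume "cmod v = r" "r > 0"
  hence "v \<noteq> 0" by auto
  moreover have "v * cnj v = of_real (r^2)" using \<open>cmod v = r\<close> complex_norm_square[of v] by simp
  ultimately show ?thesis by (simp add: field_simps)
qed

lemma circle_q:
  assumes "cmod v = r" "r > 0"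
  shows "of_real ((cmod (1 - v))\<^sup>2) = (1 - v) * (v - of_real (r^2)) / v"
proof -
  have "v \<noteq> 0" using assms by auto
  have "of_real ((cmod (1 - v))\<^sup>2) = (1 - v) * cnj (1 - v)" by (rule complex_norm_square)
  also have "\<dots> = (1 - v) * (1 - of_real (r^2) / v)" using cnj_circle[OF assms] by simp
  also have "\<dots> = (1 - v) * (v - of_real (r^2)) / v" using \<open>v \<noteq> 0\<close> by (simp add: field_simps)
  finally show ?thesis .
qed

lemma circle_integral:
  fixes r :: real and g :: "complex \<Rightarrow> complex" and k :: nat
  assumes r: "0 < r" "r < 1"
    and hol: "g holomorphic_on ball 0 1"
    and geq: "\<And>v. cmod v = r \<Longrightarrow> g v = v ^ k / (1 - v) ^ Suc k"
  shows "((\<lambda>t. 1 / (cmod (1 - of_real r * cis t))\<^sup>2 ^ Suc k) has_integral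
           2 * pi * Re ((deriv ^^ k) g (of_real (r^2)) / fact k)) {0..2*pi}"
proof -
  have sub: "cball 0 r \<subseteq> ball (0::complex) 1" using r by auto
  have contg: "continuous_on (cball 0 r) g"
    using holomorphic_on_imp_continuous_on[OF hol] sub continuous_on_subset by blast
  have holg: "g holomorphic_on ball 0 r" using hol sub by (meson ball_subset_cball holomorphic_on_subset subset_trans)
  have "r^2 < r" using r by (simp add: power2_eq_square)
  hence win: "of_real (r^2) \<in> ball (0::complex) r" using r by (simp add: norm_power)
  from Cauchy_has_contour_integral_higher_derivative_circlepath[OF contg holg win, of k]
  have "((\<lambda>u. g u / (u - of_real (r^2)) ^ Suc k) has_contour_integral
          (2 * pi * \<i>) / fact k * (deriv ^^ k) g (of_real (r^2))) (part_circlepath 0 r 0 (2*pi))"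
    by (simp add: circlepath_def)
  hence I: "((\<lambda>t. g (0 + of_real r * cis t) / (0 + of_real r * cis t - of_real (r^2)) ^ Suc k * of_real r * \<i> * cis t)
          has_integral (2 * pi * \<i>) / fact k * (deriv ^^ k) g (of_real (r^2))) {0..2*pi}"
    by (subst (asm) has_contour_integral_part_circlepath_iff) auto
  have eq: "g (0 + of_real r * cis t) / (0 + of_real r * cis t - of_real (r^2)) ^ Suc k * of_real r * \<i> * cis t
      = \<i> * of_real (1 / (cmod (1 - of_real r * cis t))\<^sup>2 ^ Suc k)" for t
  proof -
    define v where "v = of_real r * cis t"
    have cw: "cmod v = r" using r unfolding v_def by (simp add: norm_mult)
    have w0: "v \<noteq> 0" using cw r by auto
    have w1: "1 - v \<noteq> 0" using cw r by auto
    have wr: "v - of_real (r^2) \<noteq> 0"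
    proof
      assume "v - of_real (r^2) = 0"
      hence "cmod v = r^2" by (simp add: norm_power)
      with cw r show False by (simp add: power2_eq_square)
    qed
    have "of_real (1 / (cmod (1 - v))\<^sup>2 ^ Suc k) = 1 / ((1 - v) * (v - of_real (r^2)) / v) ^ Suc k"
      using circle_q[OF cw r(1)] by (metis of_real_1 of_real_divide of_real_power)
    also have "\<dots> = v ^ Suc k / ((1 - v) ^ Suc k * (v - of_real (r^2)) ^ Suc k)"
      by (simp add: power_divide power_mult_distrib)
    finally have e1: "of_real (1 / (cmod (1 - v))\<^sup>2 ^ Suc k) = v ^ Suc k / ((1 - v) ^ Suc k * (v - of_real (r^2)) ^ Suc k)" .
    have "g v / (v - of_real (r^2)) ^ Suc k * of_real r * \<i> * cis t = \<i> * (g v / (v - of_real (r^2)) ^ Suc k * v)"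
      unfolding v_def by (simp add: ac_simps)
    also have "\<dots> = \<i> * (v ^ Suc k / ((1 - v) ^ Suc k * (v - of_real (r^2)) ^ Suc k))"
      using geq[OF cw] by (simp add: divide_divide_eq_left power_Suc2 del: power_Suc)
    finally show ?thesis using e1 unfolding v_def by simp
  qed
  from I have "((\<lambda>t. \<i> * of_real (1 / (cmod (1 - of_real r * cis t))\<^sup>2 ^ Suc k))
          has_integral (2 * pi * \<i>) / fact k * (deriv ^^ k) g (of_real (r^2))) {0..2*pi}"
    unfolding eq .
  from has_integral_mult_right[OF this, of "- \<i>"]
  have "((\<lambda>t. of_real (1 / (cmod (1 - of_real r * cis t))\<^sup>2 ^ Suc k))
          has_integral of_real (2 * pi) * ((deriv ^^ k) g (of_real (r^2)) / fact k)) {0..2*pi}"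
    by (simp add: field_simps)
  note calculation = has_integral_linear[OF this bounded_linear_Re]
  have "((\<lambda>t. 1 / (cmod (1 - of_real r * cis t))\<^sup>2 ^ Suc k) has_integral
     Re (of_real (2 * pi) * ((deriv ^^ k) g (of_real (r^2)) / fact k))) {0..2*pi}"
    using calculation by (simp add: o_def)
  moreover have "Re (of_real (2 * pi) * ((deriv ^^ k) g (of_real (r^2)) / fact k)) =
     2 * pi * Re ((deriv ^^ k) g (of_real (r^2)) / fact k)" by (rule Re_ofreal_mult)
  ultimately show ?thesis by simp
qed

definition qr :: "real \<Rightarrow> real \<Rightarrow> real" where "qr r t = (cmod (1 - of_real r * cis t))\<^sup>2"

lemma ball_ne1: "v \<in> ball (0::complex) 1 \<Longrightarrow> 1 - v \<noteq> 0" by auto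

lemma I1: assumes "0 < r" "r < 1"
  shows "((\<lambda>t. 1 / qr r t) has_integral 2 * pi / (1 - r^2)) {0..2*pi}"
proof -
  have h: "(\<lambda>v. 1 / (1 - v)) holomorphic_on ball 0 1"
    using ball_ne1 by (auto intro!: holomorphic_intros)
  have "r^2 < 1" using assms by (simp add: power_less_one_iff)
  from circle_integral[OF assms h, of 0]
  have "((\<lambda>t. 1 / qr r t) has_integral 2 * pi * Re (1 / (1 - of_real (r^2)))) {0..2*pi}"
    unfolding qr_def by simp
  moreover have "Re (1 / (1 - complex_of_real (r^2))) = 1 / (1 - r^2)"
    by (metis Re_complex_of_real of_real_1 of_real_diff of_real_divide)
  ultimately show ?thesis by simp
qed

lemma I2: assumes "0 < r" "r < 1"
  shows "((\<lambda>t. 1 / (qr r t)^2) has_integral 2 * pi * (1 + r^2) / (1 - r^2)^3) {0..2*pi}"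
proof -
  let ?g = "\<lambda>v::complex. v / (1 - v)^2"
  have h: "?g holomorphic_on ball 0 1"
    using ball_ne1 by (auto intro!: holomorphic_intros)
  have "r^2 < 1" using assms by (simp add: power_less_one_iff)
  hence "complex_of_real (r^2) \<noteq> 1" by (metis of_real_eq_1_iff less_irrefl)
  hence n: "1 - complex_of_real (r^2) \<noteq> 0" by simp
  have "(?g has_field_derivative (1 + v) / (1 - v)^3) (at v)" if "1 - v \<noteq> 0" for v
    using that by (auto intro!: derivative_eq_intros) (simp add: divide_simps, algebra)
  note this[OF n]
  hence d: "deriv ?g (of_real (r^2)) = (1 + of_real (r^2)) / (1 - of_real (r^2))^3" by (rule DERIV_imp_deriv)
  have d1: "(deriv ^^ 1) ?g (of_real (r^2)) = (1 + of_real (r^2)) / (1 - of_real (r^2))^3" using d by simp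
  have geq: "?g v = v ^ 1 / (1 - v) ^ Suc 1" for v by (simp add: numeral_2_eq_2)
  have "((\<lambda>t. 1 / (qr r t)^2) has_integral 2 * pi * Re ((deriv ^^ 1) ?g (of_real (r^2)) / fact 1)) {0..2*pi}"
    using circle_integral[OF assms h geq] unfolding qr_def numeral_2_eq_2 One_nat_def .
  hence "((\<lambda>t. 1 / (qr r t)^2) has_integral 2 * pi * Re ((1 + of_real (r^2)) / (1 - of_real (r^2))^3)) {0..2*pi}"
    unfolding d1 by simp
  moreover have "(1 + complex_of_real (r^2)) / (1 - complex_of_real (r^2))^3 = complex_of_real ((1 + r^2) / (1 - r^2)^3)"
    by simp
  hence "Re ((1 + complex_of_real (r^2)) / (1 - complex_of_real (r^2))^3) = (1 + r^2) / (1 - r^2)^3"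
    by (simp only: Re_complex_of_real)
  ultimately show ?thesis by simp
qed

lemma I3: assumes "0 < r" "r < 1"
  shows "((\<lambda>t. 1 / (qr r t)^3) has_integral 2 * pi * (1 + 4 * r^2 + r^4) / (1 - r^2)^5) {0..2*pi}"
proof -
  let ?g = "\<lambda>v::complex. v^2 / (1 - v)^3"
  let ?h = "\<lambda>v::complex. (2 * v + v^2) / (1 - v)^4"
  define \<rho> where "\<rho> = complex_of_real (r^2)"
  have h: "?g holomorphic_on ball 0 1"
    using ball_ne1 by (auto intro!: holomorphic_intros)
  have "r^2 < 1" using assms by (simp add: power_less_one_iff)
  hence \<rho>b: "\<rho> \<in> ball 0 1" unfolding \<rho>_def by (simp add: norm_power)
  have dg: "deriv ?g v = ?h v" if "v \<in> ball 0 1" for v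
  proof -
    have "1 - v \<noteq> 0" using that by auto
    hence "(?g has_field_derivative ?h v) (at v)"
      by (auto intro!: derivative_eq_intros) (simp add: divide_simps, algebra)
    thus ?thesis by (rule DERIV_imp_deriv)
  qed
  have "eventually (\<lambda>v. v \<in> ball 0 1) (nhds \<rho>)" using \<rho>b by (intro eventually_nhds_in_open) auto
  hence ev: "eventually (\<lambda>v. deriv ?g v = ?h v) (nhds \<rho>)" by eventually_elim (use dg in auto)
  have n: "1 - \<rho> \<noteq> 0" using \<rho>b by auto
  have "(?h has_field_derivative (2 + 8 * \<rho> + 2 * \<rho>^2) / (1 - \<rho>)^5) (at \<rho>)"
    using n by (auto intro!: derivative_eq_intros) (simp add: divide_simps, algebra)
  hence "deriv ?h \<rho> = (2 + 8 * \<rho> + 2 * \<rho>^2) / (1 - \<rho>)^5" by (rule DERIV_imp_deriv)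
  hence d: "(deriv ^^ 2) ?g \<rho> = (2 + 8 * \<rho> + 2 * \<rho>^2) / (1 - \<rho>)^5"
    using deriv_cong_ev[OF ev refl] by (simp add: numeral_2_eq_2)
  from circle_integral[OF assms h, of 2]
  have "((\<lambda>t. 1 / (qr r t)^3) has_integral 2 * pi * Re ((2 + 8 * \<rho> + 2 * \<rho>^2) / (1 - \<rho>)^5 / 2)) {0..2*pi}"
    unfolding qr_def d[unfolded \<rho>_def] \<rho>_def by (simp add: power2_eq_square power3_eq_cube)
  moreover have "(2 + 8 * \<rho> + 2 * \<rho>^2) / (1 - \<rho>)^5 / 2 = complex_of_real ((2 + 8 * r^2 + 2 * (r^2)^2) / (1 - r^2)^5 / 2)"
    unfolding \<rho>_def by simp
  moreover have "(1 - r^2)^5 \<noteq> 0" using \<open>r^2 < 1\<close> by simp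
  hence "(2 + 8 * r^2 + 2 * (r^2)^2) / (1 - r^2)^5 / 2 = (1 + 4 * r^2 + r^4) / (1 - r^2)^5"
    by (simp add: field_simps flip: power_mult)
  ultimately show ?thesis by simp
qed




lemma sin_ge_third: fixes x :: real assumes "0 \<le> x" "x \<le> 2" shows "x / 3 \<le> sin x"
proof -
  have m: "\<bar>sin x - (\<Sum>m<3. sin_coeff m * x ^ m)\<bar> \<le> inverse (fact 3) * \<bar>x\<bar> ^ 3"
    by (rule Maclaurin_sin_bound)
  have e: "(\<Sum>m<3. sin_coeff m * (x::real) ^ m) = sin_coeff 0 * x^0 + sin_coeff 1 * x^1 + sin_coeff 2 * x^2"
    by (simp add: numeral_3_eq_3 numeral_2_eq_2 del: sin_coeff_Suc)
  have c0: "sin_coeff 0 = 0" by (simp add: sin_coeff_def)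
  have c1: "sin_coeff 1 = 1" unfolding sin_coeff_def by simp
  have c2: "sin_coeff 2 = 0" unfolding sin_coeff_def by simp
  have s: "(\<Sum>m<3. sin_coeff m * x ^ m) = x" unfolding e c0 c1 c2 by simp
  have f3: "fact 3 = (6::real)" by (simp add: numeral_3_eq_3)
  have ax: "\<bar>x\<bar> = x" using assms by simp
  have f: "inverse (fact 3) * \<bar>x\<bar> ^ 3 = x^3 / 6" unfolding f3 ax by simp
  have "\<bar>sin x - x\<bar> \<le> x ^ 3 / 6" using m unfolding s f .
  moreover have "x ^ 3 / 6 \<le> x * 4 / 6"
  proof -
    have "x * x \<le> 2 * 2" using assms by (intro mult_mono) auto
    hence "x^2 \<le> 4" by (simp add: power2_eq_square)
    hence "x * x^2 \<le> x * 4" using assms by (intro mult_left_mono) auto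
    thus ?thesis by (simp add: power3_eq_cube power2_eq_square)
  qed
  ultimately show ?thesis by linarith
qed

lemma chord_ge: assumes "0 \<le> t" "t \<le> 2 * pi" shows "min t (2 * pi - t) \<le> 3 * cmod (1 - cis t)"
proof -
  have c: "cmod (1 - cis t) = 2 * \<bar>sin (t/2)\<bar>"
  proof -
    have "(cmod (1 - cis t))\<^sup>2 = (1 - cos t)\<^sup>2 + (sin t)\<^sup>2" by (simp add: cmod_power2 cis.sel)
    also have "\<dots> = 2 - 2 * cos t" using sin_cos_squared_add[of t] by (simp add: power2_eq_square algebra_simps)
    also have "\<dots> = (2 * \<bar>sin (t/2)\<bar>)\<^sup>2" using cos_double_sin[of "t/2"] by (simp add: power_mult_distrib)
    finally have "(cmod (1 - cis t))\<^sup>2 = (2 * \<bar>sin (t/2)\<bar>)\<^sup>2" .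
    thus ?thesis using power2_eq_iff_nonneg[of "cmod (1 - cis t)" "2 * \<bar>sin (t/2)\<bar>"] by simp
  qed
  have p2: "pi / 2 \<le> 2" using pi_less_4 by simp
  show ?thesis
  proof (cases "t \<le> pi")
    case True
    have "t/2/3 \<le> sin (t/2)" using True assms p2 by (intro sin_ge_third) auto
    hence "t \<le> 3 * cmod (1 - cis t)" using c by simp
    thus ?thesis by simp
  next
    case False
    have "(2*pi - t)/2/3 \<le> sin ((2*pi - t)/2)" using False assms p2 by (intro sin_ge_third) auto
    also have "sin ((2*pi - t)/2) = sin (t/2)"
    proof -
      have "sin ((2*pi - t)/2) = sin (pi - t/2)" by (rule arg_cong[where f=sin]) simp
      also have "\<dots> = sin (t/2)" by simp
      finally show ?thesis .
    qed
    finally have "2 * pi - t \<le> 3 * cmod (1 - cis t)" using c by simp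
    thus ?thesis by simp
  qed
qed

lemma test_fun_cont: "test_fun_T \<phi> \<Longrightarrow> continuous_on S \<phi>"
  unfolding test_fun_T_def
  by (meson continuous_at_imp_continuous_on differentiable_imp_continuous_within smooth_real.cases)

lemma test_fun_lip:
  assumes "test_fun_T \<phi>"
  shows "\<exists>B\<ge>0. \<forall>t\<in>{0..2*pi}. \<bar>\<phi> t - \<phi> 0\<bar> \<le> B * cmod (1 - cis t)"
proof -
  from assms have sm: "smooth_real \<phi>" and per0: "\<forall>\<theta>. \<phi> (\<theta> + 2 * pi) = \<phi> \<theta>" unfolding test_fun_T_def by auto
  have per: "\<phi> (2*pi) = \<phi> 0" using per0[rule_format, of 0] by simp
  from sm have dif: "\<forall>x. \<phi> differentiable (at x)" and sm': "smooth_real (deriv \<phi>)" by (auto elim: smooth_real.cases)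
  from sm' have "\<forall>x. deriv \<phi> differentiable (at x)" by (auto elim: smooth_real.cases)
  hence "continuous_on {0..2*pi} (deriv \<phi>)"
    by (meson continuous_at_imp_continuous_on differentiable_imp_continuous_within)
  hence "compact (deriv \<phi> ` {0..2*pi})" by (intro compact_continuous_image) auto
  hence "bounded (deriv \<phi> ` {0..2*pi})" by (rule compact_imp_bounded)
  then obtain C where C: "\<forall>x\<in>{0..2*pi}. norm (deriv \<phi> x) \<le> C"
    unfolding bounded_iff by blast
  have C0: "C \<ge> 0" using C[rule_format, of 0] by auto
  have D: "(\<phi> has_field_derivative deriv \<phi> x) (at x within {0..2*pi})" for x
    using dif DERIV_deriv_iff_real_differentiable has_field_derivative_at_within by blast
  have lip: "\<bar>\<phi> x - \<phi> y\<bar> \<le> C * \<bar>x - y\<bar>" if "x \<in> {0..2*pi}" "y \<in> {0..2*pi}" for x y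
    using field_differentiable_bound[OF convex_real_interval(5) D C[rule_format] that] by simp
  show ?thesis
  proof (intro exI[of _ "3 * C"] conjI ballI)
    show "0 \<le> 3 * C" using C0 by simp
    fix t assume t: "t \<in> {0..2*pi}"
    have 1: "\<bar>\<phi> t - \<phi> 0\<bar> \<le> C * t" using lip[OF t, of 0] t by auto
    have "\<bar>\<phi> t - \<phi> 0\<bar> = \<bar>\<phi> t - \<phi> (2*pi)\<bar>" using per by simp
    also have "\<dots> \<le> C * (2*pi - t)" using lip[OF t, of "2*pi"] t by auto
    finally have 2: "\<bar>\<phi> t - \<phi> 0\<bar> \<le> C * (2*pi - t)" .
    have "\<bar>\<phi> t - \<phi> 0\<bar> \<le> C * min t (2*pi - t)" using 1 2 by (simp add: min_def)
    also have "\<dots> \<le> C * (3 * cmod (1 - cis t))" using chord_ge[of t] t C0 by (intro mult_left_mono) auto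
    finally show "\<bar>\<phi> t - \<phi> 0\<bar> \<le> 3 * C * cmod (1 - cis t)" by simp
  qed
qed




lemma qr_pos: "0 \<le> r \<Longrightarrow> r < 1 \<Longrightarrow> qr r t > 0"
proof -
  assume r: "0 \<le> r" "r < 1"
  have "cmod (of_real r * cis t) = r" using r by (simp add: norm_mult)
  hence "of_real r * cis t \<noteq> 1" using r by auto
  hence "cmod (1 - of_real r * cis t) > 0" by simp
  thus ?thesis unfolding qr_def by simp
qed

lemma qr_cont: "continuous_on S (qr r)"
  unfolding qr_def by (intro continuous_intros)

lemma HH_circle:
  assumes "0 \<le> r" "r < 1"
  shows "HH (of_real r * cis t) = (1 - r^2)^4/2 * (1 / qr r t) + ((1 - r^2)^5/2 - (1 - r^2)^4/4) * (1 / (qr r t)^2)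
           + (1 - r^2)^6/6 * (1 / (qr r t)^3)"
proof -
  have c: "cmod (of_real r * cis t) = r" using assms by (simp add: norm_mult)
  have c4: "(cmod (1 - of_real r * cis t)) ^ 4 = (qr r t)^2" unfolding qr_def by (simp flip: power_mult)
  have c6: "(cmod (1 - of_real r * cis t)) ^ 6 = (qr r t)^3" unfolding qr_def by (simp flip: power_mult)
  have "qr r t > 0" using qr_pos assms by blast
  thus ?thesis unfolding HH_def c c4 c6 qr_def[symmetric] by (simp add: field_simps)
qed

lemma basis_int:
  assumes "0 < r" "r < 1"
  shows "((\<lambda>t. c0 + c1 * (1 / qr r t) + c2 * (1 / (qr r t)^2) + c3 * (1 / (qr r t)^3)) has_integral
     (c0 * (2*pi) + c1 * (2 * pi / (1 - r^2)) + c2 * (2 * pi * (1 + r^2) / (1 - r^2)^3)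
       + c3 * (2 * pi * (1 + 4 * r^2 + r^4) / (1 - r^2)^5))) {0..2*pi}"
proof -
  have h0: "((\<lambda>t. c0) has_integral c0 * (2*pi)) {0..2*pi}"
    using has_integral_const_real[of c0 0 "2*pi"] by (simp add: mult.commute)
  show ?thesis
    by (intro has_integral_add h0 has_integral_mult_right I1 I2 I3 assms)
qed

definition bval :: "real \<Rightarrow> real \<Rightarrow> real \<Rightarrow> real \<Rightarrow> real \<Rightarrow> real" where
  "bval c0 c1 c2 c3 r = c0 * (2*pi) + c1 * (2 * pi / (1 - r^2)) + c2 * (2 * pi * (1 + r^2) / (1 - r^2)^3)
       + c3 * (2 * pi * (1 + 4 * r^2 + r^4) / (1 - r^2)^5)"

definition ca :: "real \<Rightarrow> real" where "ca r = (1 - r^2)^4/2"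
definition cb :: "real \<Rightarrow> real" where "cb r = (1 - r^2)^5/2 - (1 - r^2)^4/4"
definition cb' :: "real \<Rightarrow> real" where "cb' r = (1 - r^2)^5/2 + (1 - r^2)^4/4"
definition cc :: "real \<Rightarrow> real" where "cc r = (1 - r^2)^6/6"

definition Mr :: "real \<Rightarrow> real" where "Mr r = bval 0 (ca r) (cb r) (cc r) r"
definition Ur :: "real \<Rightarrow> real" where
  "Ur r = bval (ca r / (2 * (1 - r))) (cb' r / (2 * (1 - r)) + 3 * (1 - r) / 2 * ca r)
               (cc r / (2 * (1 - r)) + 3 * (1 - r) / 2 * cb' r) (3 * (1 - r) / 2 * cc r) r"

lemma chord_le:
  assumes "0 < r" "r < 1"
  shows "cmod (1 - cis t) \<le> qr r t / (2 * (1 - r)) + 3 * (1 - r) / 2"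
proof -
  define d where "d = 1 - r"
  define c where "c = cmod (1 - of_real r * cis t)"
  have d: "d > 0" using assms d_def by simp
  have "cmod (1 - cis t) = cmod ((1 - of_real r * cis t) + (of_real r * cis t - cis t))" by simp
  also have "\<dots> \<le> c + cmod (of_real r * cis t - cis t)" unfolding c_def by (rule norm_triangle_ineq)
  finally have 1: "cmod (1 - cis t) \<le> c + cmod (of_real r * cis t - cis t)" .
  have "of_real r * cis t - cis t = of_real (r - 1) * cis t" by (simp add: algebra_simps)
  hence "cmod (of_real r * cis t - cis t) = \<bar>r - 1\<bar>" by (simp only: norm_mult norm_of_real norm_cis mult_1_right)
  also have "\<bar>r - 1\<bar> = d" using assms unfolding d_def by (simp add: abs_if)
  finally have 2: "cmod (of_real r * cis t - cis t) = d" .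
  have 3: "c \<le> c^2 / (2 * d) + d / 2"
  proof -
    have "0 \<le> (c - d)^2" by simp
    hence "2 * d * c \<le> c^2 + d^2" by (simp add: power2_eq_square algebra_simps)
    thus ?thesis using d by (simp add: field_simps power2_eq_square)
  qed
  have "cmod (1 - cis t) \<le> c^2 / (2 * d) + d / 2 + d" using 1 2 3 by linarith
  moreover have "d / 2 + d = 3 * (1 - r) / 2" unfolding d_def by (simp add: field_simps)
  ultimately show ?thesis unfolding c_def d_def qr_def by linarith
qed

lemma main_bound:
  assumes r: "0 < r" "r < 1" and tf: "test_fun_T \<phi>"
    and B: "B \<ge> 0" "\<forall>t\<in>{0..2*pi}. \<bar>\<phi> t - \<phi> 0\<bar> \<le> B * cmod (1 - cis t)"
  shows "\<bar>pair_r HH r \<phi> / (1 - r) - \<phi> 0\<bar> \<le> \<bar>\<phi> 0\<bar> * \<bar>Mr r / (2*pi*(1-r)) - 1\<bar> + B * (Ur r / (2*pi*(1-r)))"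
proof -
  define d where "d = 1 - r"
  have d: "d > 0" using r d_def by simp
  define F where "F t = HH (of_real r * cis t)" for t
  define q where "q = qr r"
  have qpos: "q t > 0" for t unfolding q_def using qr_pos r by auto
  have Feq: "F = (\<lambda>t. 0 + ca r * (1 / q t) + cb r * (1 / (q t)^2) + cc r * (1 / (q t)^3))"
    unfolding F_def q_def ca_def cb_def cc_def using HH_circle r by (auto intro!: ext)
  have hF: "(F has_integral Mr r) {0..2*pi}"
    unfolding Feq Mr_def bval_def q_def by (rule basis_int[OF r])
  have Fc: "continuous_on {0..2*pi} F"
    unfolding Feq q_def using qr_pos r by (intro continuous_intros qr_cont) (auto simp: less_le)
  have \<phi>c: "continuous_on {0..2*pi} \<phi>" using test_fun_cont[OF tf] .
  define R where "R = integral {0..2*pi} (\<lambda>t. F t * (\<phi> t - \<phi> 0))"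
  have i1: "(\<lambda>t. \<phi> 0 * F t) integrable_on {0..2*pi}"
    by (intro integrable_continuous_interval continuous_intros Fc)
  have i2: "(\<lambda>t. F t * (\<phi> t - \<phi> 0)) integrable_on {0..2*pi}"
    by (intro integrable_continuous_interval continuous_intros Fc \<phi>c)
  have "integral {0..2*pi} (\<lambda>t. F t * \<phi> t) = integral {0..2*pi} (\<lambda>t. \<phi> 0 * F t + F t * (\<phi> t - \<phi> 0))"
    by (simp add: algebra_simps)
  also have "\<dots> = \<phi> 0 * Mr r + R"
    unfolding R_def integral_add[OF i1 i2] integral_mult_right integral_unique[OF hF] ..
  finally have IP: "integral {0..2*pi} (\<lambda>t. F t * \<phi> t) = \<phi> 0 * Mr r + R" .
  define U where "U t = ca r / (2 * d) + (cb' r / (2 * d) + 3 * d / 2 * ca r) * (1 / q t)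
      + (cc r / (2 * d) + 3 * d / 2 * cb' r) * (1 / (q t)^2) + 3 * d / 2 * cc r * (1 / (q t)^3)" for t
  have hU: "((\<lambda>t. B * U t) has_integral B * Ur r) {0..2*pi}"
    unfolding U_def Ur_def bval_def d_def q_def by (intro has_integral_mult_right basis_int[OF r])
  have pw: "norm (F t * (\<phi> t - \<phi> 0)) \<le> B * U t" if t: "t \<in> {0..2*pi}" for t
  proof -
    have a0: "0 \<le> 1 - r^2" using r by (simp add: power_le_one)
    have p4: "0 \<le> (1 - r^2)^4" "0 \<le> (1 - r^2)^5" "0 \<le> (1 - r^2)^6" using a0 by auto
    have cab: "0 \<le> ca r" "0 \<le> cc r" "\<bar>cb r\<bar> \<le> cb' r" unfolding ca_def cc_def cb_def cb'_def using p4
      by (auto simp: abs_le_iff)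
    define T where "T = ca r * (1 / q t) + cb' r * (1 / (q t)^2) + cc r * (1 / (q t)^3)"
    have qt: "q t > 0" by (rule qpos)
    have "\<bar>F t\<bar> \<le> \<bar>ca r * (1 / q t)\<bar> + \<bar>cb r * (1 / (q t)^2)\<bar> + \<bar>cc r * (1 / (q t)^3)\<bar>"
      unfolding Feq by linarith
    also have "\<dots> \<le> T" unfolding T_def using cab qt
      by (simp add: abs_mult divide_right_mono)
    finally have FT: "\<bar>F t\<bar> \<le> T" .
    have T0: "0 \<le> T" unfolding T_def using cab qt by (intro add_nonneg_nonneg mult_nonneg_nonneg) auto
    have "\<bar>\<phi> t - \<phi> 0\<bar> \<le> B * cmod (1 - cis t)" using B t by blast
    also have "\<dots> \<le> B * (q t / (2 * d) + 3 * d / 2)"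
      using chord_le[OF r, of t] B(1) unfolding q_def d_def by (intro mult_left_mono) auto
    finally have P: "\<bar>\<phi> t - \<phi> 0\<bar> \<le> B * (q t / (2 * d) + 3 * d / 2)" .
    have "norm (F t * (\<phi> t - \<phi> 0)) = \<bar>F t\<bar> * \<bar>\<phi> t - \<phi> 0\<bar>" by (simp add: abs_mult)
    also have "\<dots> \<le> T * (B * (q t / (2 * d) + 3 * d / 2))" using FT P T0 by (intro mult_mono) auto
    also have "\<dots> = B * U t" unfolding T_def U_def using qt d
      by (simp add: field_simps power2_eq_square power3_eq_cube)
    finally show ?thesis .
  qed
  have Rb: "\<bar>R\<bar> \<le> B * Ur r"
  proof -
    have "norm R \<le> integral {0..2*pi} (\<lambda>t. B * U t)"
      unfolding R_def by (rule integral_norm_bound_integral[OF i2 has_integral_integrable[OF hU] pw])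
    thus ?thesis unfolding integral_unique[OF hU] real_norm_def .
  qed
  have pe: "pair_r HH r \<phi> = (\<phi> 0 * Mr r + R) / (2 * pi)"
    unfolding pair_r_def IP[symmetric] F_def ..
  have "pair_r HH r \<phi> / (1 - r) - \<phi> 0 = \<phi> 0 * (Mr r / (2*pi*(1-r)) - 1) + R / (2*pi*(1-r))"
  proof -
    define K where "K = 2 * pi * (1 - r)"
    have K: "K \<noteq> 0" using r unfolding K_def by auto
    have "pair_r HH r \<phi> / (1 - r) = (\<phi> 0 * Mr r + R) / K" unfolding pe K_def by simp
    also have "\<dots> = \<phi> 0 * (Mr r / K - 1) + R / K + \<phi> 0"
      using K by (simp add: field_simps)
    finally show ?thesis unfolding K_def by simp
  qed
  also have "\<bar>\<dots>\<bar> \<le> \<bar>\<phi> 0\<bar> * \<bar>Mr r / (2*pi*(1-r)) - 1\<bar> + \<bar>R\<bar> / (2*pi*(1-r))"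
    using d d_def by (simp add: abs_mult abs_triangle_ineq[THEN order_trans])
  also have "\<dots> \<le> \<bar>\<phi> 0\<bar> * \<bar>Mr r / (2*pi*(1-r)) - 1\<bar> + B * Ur r / (2*pi*(1-r))"
    using Rb d d_def by (intro add_left_mono divide_right_mono) auto
  finally show ?thesis by simp
qed

lemma lim_M: "((\<lambda>r. Mr r / (2*pi*(1-r))) \<longlongrightarrow> 1) (at_left 1)"
  unfolding Mr_def bval_def ca_def cb_def cc_def by real_asymp

lemma lim_U: "((\<lambda>r. Ur r / (2*pi*(1-r))) \<longlongrightarrow> 0) (at_left 1)"
  unfolding Ur_def bval_def ca_def cb'_def cc_def by real_asymp

lemma boundary_limit:
  assumes tf: "test_fun_T \<phi>"
  shows "((\<lambda>r. (pair_r HH r \<phi> - 0) / (1 - r)) \<longlongrightarrow> \<phi> 0) (at_left 1)"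
proof -
  obtain B where B: "B \<ge> 0" "\<forall>t\<in>{0..2*pi}. \<bar>\<phi> t - \<phi> 0\<bar> \<le> B * cmod (1 - cis t)"
    using test_fun_lip[OF tf] by blast
  define g where "g r = \<bar>\<phi> 0\<bar> * \<bar>Mr r / (2*pi*(1-r)) - 1\<bar> + B * (Ur r / (2*pi*(1-r)))" for r
  have "((\<lambda>r. Mr r / (2*pi*(1-r)) - 1) \<longlongrightarrow> 1 - 1) (at_left 1)"
    by (intro tendsto_intros lim_M)
  hence "((\<lambda>r. \<bar>Mr r / (2*pi*(1-r)) - 1\<bar>) \<longlongrightarrow> \<bar>1 - 1\<bar>) (at_left 1)"
    by (rule tendsto_rabs)
  hence g0: "(g \<longlongrightarrow> \<bar>\<phi> 0\<bar> * \<bar>1 - 1\<bar> + B * 0) (at_left 1)"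
    unfolding g_def by (intro tendsto_intros lim_U lim_M)
  have ev: "eventually (\<lambda>r. r \<in> {0<..<1}) (at_left (1::real))"
    by (rule eventually_at_left_real) simp
  have "eventually (\<lambda>r. norm ((pair_r HH r \<phi> - 0) / (1 - r) - \<phi> 0) \<le> g r) (at_left 1)"
    using ev
  proof eventually_elim
    case (elim r)
    thus ?case using main_bound[of r \<phi> B] tf B unfolding g_def by simp
  qed
  from Lim_null_comparison[OF this] g0
  have "((\<lambda>r. (pair_r HH r \<phi> - 0) / (1 - r) - \<phi> 0) \<longlongrightarrow> 0) (at_left 1)" by simp
  from tendsto_add[OF this tendsto_const[of "\<phi> 0"]]
  show ?thesis by simp
qed

lemma boundary_zero:
  assumes tf: "test_fun_T \<phi>"
  shows "((\<lambda>r. pair_r HH r \<phi>) \<longlongrightarrow> 0) (at_left 1)"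
proof -
  have "((\<lambda>r. (pair_r HH r \<phi> - 0) / (1 - r) * (1 - r)) \<longlongrightarrow> \<phi> 0 * (1 - 1)) (at_left 1)"
    by (intro tendsto_intros boundary_limit[OF tf])
  hence l: "((\<lambda>r. (pair_r HH r \<phi> - 0) / (1 - r) * (1 - r)) \<longlongrightarrow> 0) (at_left 1)" by simp
  have ev: "eventually (\<lambda>r. r \<in> {0<..<1}) (at_left (1::real))"
    by (rule eventually_at_left_real) simp
  hence "eventually (\<lambda>r. (pair_r HH r \<phi> - 0) / (1 - r) * (1 - r) = pair_r HH r \<phi>) (at_left 1)"
    by eventually_elim auto
  thus ?thesis using l by (rule Lim_transform_eventually[rotated])
qed

theorem HH_kernel: "is_poisson_kernel 2 HH"
  unfolding is_poisson_kernel_def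
  using HH_smooth HH_pde boundary_limit boundary_zero by blast



theorem theorem3p1:
  shows "is_poisson_kernel 2 (\<lambda>z.
      (1/2) * (1 - (cmod z)\<^sup>2) ^ 4 / (cmod (1 - z))\<^sup>2
    + (1/2) * (1 - (cmod z)\<^sup>2) ^ 5 / (cmod (1 - z)) ^ 4
    - (1/4) * (1 - (cmod z)\<^sup>2) ^ 4 / (cmod (1 - z)) ^ 4
    + (1/6) * (1 - (cmod z)\<^sup>2) ^ 6 / (cmod (1 - z)) ^ 6)"
  using HH_kernel unfolding HH_def .

end
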